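(* Let $\mathcal{CS}$ be a variant closed constant specification for the basic system and $\mathcal{CS}(\mathbf V)$ its extension to $\mathit{Fml}_J(\mathbf V)$. For every basic formula $\varphi\in\mathit{Fml}_J$, if $\vdash_{\mathcal{CS}(\mathbf V)}\varphi$ then $\vdash_{\mathcal{CS}}\varphi$.
   Context: Syntax of FOLPb: terms $t::=p_i\mid c\mid t\cdot t\mid t+t\mid !t\mid\mathsf b(t)\mid\mathsf{gen}_x(t)$; formulas $Px_1\dots x_n\mid\bot\mid\varphi\to\varphi\mid\forall x\varphi\mid t{:}_X\varphi$ with $X$ a finite set of individual variables, $fv(t{:}_X\psi)=X$; $\mathit{Fml}_J$ is the set of these (basic) formulas. Axiom schemes: A1 classical first-order; A2 $t{:}_{Xy}\varphi\to t{:}_X\varphi$ ($y$ not free in $\varphi$); A3 $t{:}_X\varphi\to t{:}_{Xy}\varphi$; B1 $t{:}_X\varphi\to\varphi$; B2 $t{:}_X(\varphi\to\psi)\to(s{:}_X\varphi\to[t\cdot s]{:}_X\psi)$; B3 $t{:}_X\varphi\to[t+s]{:}_X\varphi$, $s{:}_X\varphi\to[t+s]{:}_X\varphi$; B4 $t{:}_X\varphi\to!t{:}_Xt{:}_X\varphi$; B5 $t{:}_X\varphi\to\mathsf{gen}_x(t){:}_X\forall x\varphi$ ($x\notin X$); Bb $\forall y\,t{:}_{Xy}\varphi(y)\to\mathsf b(t){:}_X\forall y\varphi(y)$; rules modus ponens and generalization. A constant specification $\mathcal{CS}$ is a set of $c{:}\psi$ with $\psi$ an axiom; $\vdash_{\mathcal{CS}}$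 is provability with $\mathcal{CS}$ added. $\mathcal{CS}$ is variant closed if $c{:}\varphi\in\mathcal{CS}\iff c{:}\psi\in\mathcal{CS}$ whenever $\varphi,\psi$ differ by a one-to-one onto renaming of free individual variables. Henkin language: $\mathbf V$ is a countable set of new witness variables, which may occur free (as predicate arguments and in subscript sets) but are never quantified nor used as $\mathsf{gen}$ subscripts; $\mathit{Fml}_J(\mathbf V)$ is the set of such Henkin formulas. $\mathcal{CS}(\mathbf V)$ is the set of all $c{:}\psi$ with $c{:}\varphi\in\mathcal{CS}$ and $\psi$ obtained from $\varphi$ by replacing some free basic variables by distinct witness variables. $\vdash_{\mathcal{CS}(\mathbf V)}$ is provability over $\mathit{Fml}_J(\mathbf V)$ with the same axiom schemes and rules and $\mathcal{CS}(\mathbf V)$ as additional axioms. *)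

theory Defs
  imports "HOL-Library.FSet"
begin

datatype var = BV nat | WV nat

definition isB :: "var \<Rightarrow> bool" where "isB v \<longleftrightarrow> (\<exists>n. v = BV n)"
definition isW :: "var \<Rightarrow> bool" where "isW v \<longleftrightarrow> (\<exists>n. v = WV n)"

datatype jt = PVar nat | JConst nat | JApp jt jt | JSum jt jt | JBang jt | JB jt | JGen var jt

text \<open>Formulas: P x1..xn, bottom, implication, universal quantifier, t:_X phi (X finite).\<close>
datatype fm = Pred nat "var list" | FBot | Imp fm fm | Forall var fm | Just jt "var fset" fm

fun fv :: "fm \<Rightarrow> var set" where
  "fv (Pred P xs) = set xs"
| "fv FBot = {}"
| "fv (Imp a b) = fv a \<union> fv b"
| "fv (Forall x a) = fv a - {x}"
| "fv (Just t X a) = fset X"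

fun tvars :: "jt \<Rightarrow> var set" where
  "tvars (PVar i) = {}"
| "tvars (JConst c) = {}"
| "tvars (JApp s t) = tvars s \<union> tvars t"
| "tvars (JSum s t) = tvars s \<union> tvars t"
| "tvars (JBang t) = tvars t"
| "tvars (JB t) = tvars t"
| "tvars (JGen x t) = insert x (tvars t)"

fun allvars :: "fm \<Rightarrow> var set" where
  "allvars (Pred P xs) = set xs"
| "allvars FBot = {}"
| "allvars (Imp a b) = allvars a \<union> allvars b"
| "allvars (Forall x a) = insert x (allvars a)"
| "allvars (Just t X a) = tvars t \<union> fset X \<union> allvars a"

definition basic :: "fm \<Rightarrow> bool" where
  "basic \<phi> \<longleftrightarrow> (\<forall>v\<in>allvars \<phi>. isB v)"

fun tgenB :: "jt \<Rightarrow> bool" where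
  "tgenB (PVar i) = True"
| "tgenB (JConst c) = True"
| "tgenB (JApp s t) = (tgenB s \<and> tgenB t)"
| "tgenB (JSum s t) = (tgenB s \<and> tgenB t)"
| "tgenB (JBang t) = tgenB t"
| "tgenB (JB t) = tgenB t"
| "tgenB (JGen x t) = (isB x \<and> tgenB t)"

fun henkin :: "fm \<Rightarrow> bool" where
  "henkin (Pred P xs) = True"
| "henkin FBot = True"
| "henkin (Imp a b) = (henkin a \<and> henkin b)"
| "henkin (Forall x a) = (isB x \<and> henkin a)"
| "henkin (Just t X a) = (tgenB t \<and> henkin a)"

text \<open>Simultaneous substitution of variables for the free variables of a formula
  (the free variables of t:_X a are those in X; proof terms are not affected).\<close>
fun substf :: "(var \<Rightarrow> var) \<Rightarrow> fm \<Rightarrow> fm" where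
  "substf \<sigma> (Pred P xs) = Pred P (map \<sigma> xs)"
| "substf \<sigma> FBot = FBot"
| "substf \<sigma> (Imp a b) = Imp (substf \<sigma> a) (substf \<sigma> b)"
| "substf \<sigma> (Forall z a) = Forall z (substf (\<sigma>(z := z)) a)"
| "substf \<sigma> (Just t X a) =
     Just t (fimage \<sigma> X) (substf (\<lambda>v. if v |\<in>| X then \<sigma> v else v) a)"

fun sfree :: "(var \<Rightarrow> var) \<Rightarrow> fm \<Rightarrow> bool" where
  "sfree \<sigma> (Pred P xs) = True"
| "sfree \<sigma> FBot = True"
| "sfree \<sigma> (Imp a b) = (sfree \<sigma> a \<and> sfree \<sigma> b)"
| "sfree \<sigma> (Forall z a) = ((\<forall>v\<in>fv (Forall z a). \<sigma> v \<noteq> z) \<and> sfree (\<sigma>(z := z)) a)"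
| "sfree \<sigma> (Just t X a) =
     ((\<forall>v\<in>fset X. \<sigma> v \<notin> fv a - fset X) \<and> sfree (\<lambda>v. if v |\<in>| X then \<sigma> v else v) a)"

inductive ax :: "fm \<Rightarrow> bool" where
  \<comment> \<open>A1: classical first-order logic (Hilbert-style, complete with MP and Gen)\<close>
  A1_K: "ax (Imp a (Imp b a))"
| A1_S: "ax (Imp (Imp a (Imp b c)) (Imp (Imp a b) (Imp a c)))"
| A1_DN: "ax (Imp (Imp (Imp a FBot) FBot) a)"
| A1_inst: "sfree (id(x := y)) a \<Longrightarrow> ax (Imp (Forall x a) (substf (id(x := y)) a))"
| A1_dist: "x \<notin> fv a \<Longrightarrow> ax (Imp (Forall x (Imp a b)) (Imp a (Forall x b)))"
| A2: "y \<notin> fv a \<Longrightarrow> y |\<notin>| X \<Longrightarrow> ax (Imp (Just t (finsert y X) a) (Just t X a))"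
| A3: "y |\<notin>| X \<Longrightarrow> ax (Imp (Just t X a) (Just t (finsert y X) a))"
| B1: "ax (Imp (Just t X a) a)"
| B2: "ax (Imp (Just t X (Imp a b)) (Imp (Just s X a) (Just (JApp t s) X b)))"
| B3l: "ax (Imp (Just t X a) (Just (JSum t s) X a))"
| B3r: "ax (Imp (Just s X a) (Just (JSum t s) X a))"
| B4: "ax (Imp (Just t X a) (Just (JBang t) X (Just t X a)))"
| B5: "x |\<notin>| X \<Longrightarrow> ax (Imp (Just t X a) (Just (JGen x t) X (Forall x a)))"
| Bb: "y |\<notin>| X \<Longrightarrow> ax (Imp (Forall y (Just t (finsert y X) a)) (Just (JB t) X (Forall y a)))"

inductive prv :: "(fm \<Rightarrow> bool) \<Rightarrow> fm set \<Rightarrow> fm \<Rightarrow> bool" for L A where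
  prv_ax: "ax \<phi> \<Longrightarrow> L \<phi> \<Longrightarrow> prv L A \<phi>"
| prv_cs: "\<phi> \<in> A \<Longrightarrow> prv L A \<phi>"
| prv_mp: "prv L A (Imp \<phi> \<psi>) \<Longrightarrow> prv L A \<phi> \<Longrightarrow> prv L A \<psi>"
| prv_gen: "prv L A \<phi> \<Longrightarrow> L (Forall x \<phi>) \<Longrightarrow> prv L A (Forall x \<phi>)"

text \<open>A constant specification is given as a set of pairs (c, psi), standing for c:psi,
  i.e. the formula c:_{} psi.\<close>
definition const_spec :: "(nat \<times> fm) set \<Rightarrow> bool" where
  "const_spec CS \<longleftrightarrow> (\<forall>(c, \<psi>) \<in> CS. ax \<psi> \<and> basic \<psi>)"

definition csfml :: "(nat \<times> fm) set \<Rightarrow> fm set" where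
  "csfml CS = {Just (JConst c) {||} \<psi> | c \<psi>. (c, \<psi>) \<in> CS}"

definition variant :: "fm \<Rightarrow> fm \<Rightarrow> bool" where
  "variant \<phi> \<psi> \<longleftrightarrow> basic \<phi> \<and> basic \<psi> \<and>
     (\<exists>\<sigma>. inj_on \<sigma> (fv \<phi>) \<and> sfree \<sigma> \<phi> \<and> \<psi> = substf \<sigma> \<phi>)"

definition variant_closed :: "(nat \<times> fm) set \<Rightarrow> bool" where
  "variant_closed CS \<longleftrightarrow>
     (\<forall>c \<phi> \<psi>. variant \<phi> \<psi> \<longrightarrow> ((c, \<phi>) \<in> CS \<longleftrightarrow> (c, \<psi>) \<in> CS))"

definition replaceW :: "(var \<Rightarrow> var) \<Rightarrow> fm \<Rightarrow> bool" where
  "replaceW \<sigma> \<phi> \<longleftrightarrow> (\<forall>v. \<sigma> v \<noteq> v \<longrightarrow> v \<in> fv \<phi> \<and> isB v \<and> isW (\<sigma> v)) \<and> inj_on \<sigma> (fv \<phi>)"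

definition CSV :: "(nat \<times> fm) set \<Rightarrow> (nat \<times> fm) set" where
  "CSV CS = {(c, substf \<sigma> \<phi>) | c \<phi> \<sigma>. (c, \<phi>) \<in> CS \<and> replaceW \<sigma> \<phi>}"

abbreviation prvCS :: "(nat \<times> fm) set \<Rightarrow> fm \<Rightarrow> bool" where
  "prvCS CS \<phi> \<equiv> prv basic (csfml CS) \<phi>"

abbreviation prvCSV :: "(nat \<times> fm) set \<Rightarrow> fm \<Rightarrow> bool" where
  "prvCSV CS \<phi> \<equiv> prv henkin (csfml (CSV CS)) \<phi>"

end

theory Submission
  imports Defs
begin

fun rent :: "(var \<Rightarrow> var) \<Rightarrow> jt \<Rightarrow> jt" where
  "rent r (PVar i) = PVar i"
| "rent r (JConst c) = JConst c"
| "rent r (JApp s t) = JApp (rent r s) (rent r t)"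
| "rent r (JSum s t) = JSum (rent r s) (rent r t)"
| "rent r (JBang t) = JBang (rent r t)"
| "rent r (JB t) = JB (rent r t)"
| "rent r (JGen x t) = JGen (r x) (rent r t)"

fun ren :: "(var \<Rightarrow> var) \<Rightarrow> fm \<Rightarrow> fm" where
  "ren r (Pred P xs) = Pred P (map r xs)"
| "ren r FBot = FBot"
| "ren r (Imp a b) = Imp (ren r a) (ren r b)"
| "ren r (Forall x a) = Forall (r x) (ren r a)"
| "ren r (Just t X a) = Just (rent r t) (fimage r X) (ren r a)"

lemma fv_ren: "inj r \<Longrightarrow> fv (ren r a) = r ` fv a"
  by (induction a) (auto simp: inj_eq)

lemma tvars_rent: "tvars (rent r t) = r ` tvars t"
  by (induction t) auto

lemma allvars_ren: "allvars (ren r a) = r ` allvars a"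
  by (induction a) (auto simp: tvars_rent)

lemma rent_id: "(\<forall>v\<in>tvars t. r v = v) \<Longrightarrow> rent r t = t"
  by (induction t) auto

lemma ren_id: "(\<forall>v\<in>allvars a. r v = v) \<Longrightarrow> ren r a = a"
proof (induction a)
  case (Just t X a)
  then show ?case by (auto simp: rent_id intro!: fset_eqI)
qed (auto simp: map_idI)

lemma fv_allvars: "fv a \<subseteq> allvars a"
  by (induction a) auto

lemma subst_fv_in: "v \<in> fv a \<Longrightarrow> \<sigma> v \<in> allvars (substf \<sigma> a)"
proof (induction a arbitrary: \<sigma>)
  case (Forall z a)
  then have "v \<in> fv a" "v \<noteq> z" by auto
  then have "(\<sigma>(z:=z)) v \<in> allvars (substf (\<sigma>(z:=z)) a)" using Forall.IH by blast
  with \<open>v \<noteq> z\<close> show ?case by simp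
qed auto

lemma substf_cong: "(\<forall>v\<in>allvars a. \<sigma> v = \<tau> v) \<Longrightarrow> substf \<sigma> a = substf \<tau> a"
proof (induction a arbitrary: \<sigma> \<tau>)
  case (Forall z a)
  have "substf (\<sigma>(z:=z)) a = substf (\<tau>(z:=z)) a"
    by (rule Forall.IH) (use Forall.prems in auto)
  then show ?case by simp
next
  case (Just t X a)
  have "substf (\<lambda>v. if v |\<in>| X then \<sigma> v else v) a = substf (\<lambda>v. if v |\<in>| X then \<tau> v else v) a"
    by (rule Just.IH) (use Just.prems in auto)
  moreover have "fimage \<sigma> X = fimage \<tau> X" using Just.prems by (auto intro!: fset_eqI)
  ultimately show ?case by simp
qed auto

lemma ren_substf_fix: "(\<forall>v\<in>allvars a. r v = v) \<Longrightarrow> ren r (substf \<sigma> a) = substf (r \<circ> \<sigma>) a"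
proof (induction a arbitrary: \<sigma>)
  case (Forall z a)
  have e: "r \<circ> \<sigma>(z:=z) = (r \<circ> \<sigma>)(z := z)" using Forall.prems by auto
  have "ren r (substf (\<sigma>(z:=z)) a) = substf (r \<circ> \<sigma>(z:=z)) a"
    by (rule Forall.IH) (use Forall.prems in auto)
  then show ?case using Forall.prems by (simp only: e substf.simps ren.simps) simp
next
  case (Just t X a)
  have "ren r (substf (\<lambda>v. if v |\<in>| X then \<sigma> v else v) a)
      = substf (r \<circ> (\<lambda>v. if v |\<in>| X then \<sigma> v else v)) a"
    by (rule Just.IH) (use Just.prems in auto)
  also have "\<dots> = substf (\<lambda>v. if v |\<in>| X then (r \<circ> \<sigma>) v else v) a"
    by (rule substf_cong) (use Just.prems in auto)
  finally have 1: "ren r (substf (\<lambda>v. if v |\<in>| X then \<sigma> v else v) a)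
      = substf (\<lambda>v. if v |\<in>| X then (r \<circ> \<sigma>) v else v) a" .
  have 2: "rent r t = t" using Just.prems by (auto simp: rent_id)
  have 3: "fimage r (fimage \<sigma> X) = fimage (r \<circ> \<sigma>) X" by (simp add: fimage_fimage)
  show ?case by (simp only: substf.simps ren.simps 1 2 3)
qed auto

lemma inv_bij_eq: "bij r \<Longrightarrow> inv r (r x) = x"
  by (simp add: bij_is_inj)
lemma bij_inv_r: "bij r \<Longrightarrow> r (inv r w) = w"
  by (simp add: bij_is_surj surj_f_inv_f)

lemma ren_substf: "bij r \<Longrightarrow> ren r (substf \<sigma> a) = substf (r \<circ> \<sigma> \<circ> inv r) (ren r a)"
proof (induction a arbitrary: \<sigma>)
  case (Forall z a)
  have "r \<circ> \<sigma>(z:=z) \<circ> inv r = (r \<circ> \<sigma> \<circ> inv r)(r z := r z)"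
  proof
    fix w show "(r \<circ> \<sigma>(z:=z) \<circ> inv r) w = ((r \<circ> \<sigma> \<circ> inv r)(r z := r z)) w"
      using Forall.prems inv_bij_eq[of r z] bij_inv_r[of r w] by (cases "w = r z") auto
  qed
  then show ?case using Forall.IH[OF Forall.prems, of "\<sigma>(z:=z)"]
    by (simp only: substf.simps ren.simps)
next
  case (Just t X a)
  have "r \<circ> (\<lambda>v. if v |\<in>| X then \<sigma> v else v) \<circ> inv r
      = (\<lambda>w. if w |\<in>| fimage r X then (r \<circ> \<sigma> \<circ> inv r) w else w)"
  proof
    fix w
    have "(inv r w |\<in>| X) = (w |\<in>| fimage r X)"
      using Just.prems inv_bij_eq bij_inv_r by (metis fimageE fimageI)
    then show "(r \<circ> (\<lambda>v. if v |\<in>| X then \<sigma> v else v) \<circ> inv r) w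
      = (if w |\<in>| fimage r X then (r \<circ> \<sigma> \<circ> inv r) w else w)"
      using bij_inv_r[OF Just.prems] by auto
  qed
  moreover have "fimage r (fimage \<sigma> X) = fimage (r \<circ> \<sigma> \<circ> inv r) (fimage r X)"
    using Just.prems by (auto simp: fimage_fimage inv_bij_eq intro!: fset_eqI)
  ultimately show ?case using Just.IH[OF Just.prems, of "\<lambda>v. if v |\<in>| X then \<sigma> v else v"]
    by (simp only: substf.simps ren.simps)
qed (auto simp: bij_is_inj)

lemma sfree_ren: "bij r \<Longrightarrow> sfree \<sigma> a \<Longrightarrow> sfree (r \<circ> \<sigma> \<circ> inv r) (ren r a)"
proof (induction a arbitrary: \<sigma>)
  case (Forall z a)
  have inj: "inj r" using Forall.prems bij_is_inj by blast
  have e: "r \<circ> \<sigma>(z:=z) \<circ> inv r = (r \<circ> \<sigma> \<circ> inv r)(r z := r z)"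
  proof
    fix w show "(r \<circ> \<sigma>(z:=z) \<circ> inv r) w = ((r \<circ> \<sigma> \<circ> inv r)(r z := r z)) w"
      using Forall.prems inv_bij_eq[of r z] bij_inv_r[of r w] by (cases "w = r z") auto
  qed
  have h: "sfree (\<sigma>(z:=z)) a" using Forall.prems(2) unfolding sfree.simps by (rule conjunct2)
  have "sfree (r \<circ> \<sigma>(z:=z) \<circ> inv r) (ren r a)"
    by (rule Forall.IH[OF Forall.prems(1) h])
  then have s2: "sfree ((r \<circ> \<sigma> \<circ> inv r)(r z := r z)) (ren r a)" by (simp only: e)
  have s1: "\<forall>v\<in>fv (Forall (r z) (ren r a)). (r \<circ> \<sigma> \<circ> inv r) v \<noteq> r z"
    using Forall.prems by (auto simp: fv_ren inj inv_bij_eq inj_eq)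
  show ?case using s1 s2 unfolding sfree.simps ren.simps by blast
next
  case (Just t X a)
  have inj: "inj r" using Just.prems bij_is_inj by blast
  have e: "r \<circ> (\<lambda>v. if v |\<in>| X then \<sigma> v else v) \<circ> inv r
      = (\<lambda>w. if w |\<in>| fimage r X then (r \<circ> \<sigma> \<circ> inv r) w else w)"
  proof
    fix w
    have "(inv r w |\<in>| X) = (w |\<in>| fimage r X)"
      using Just.prems inv_bij_eq bij_inv_r by (metis fimageE fimageI)
    then show "(r \<circ> (\<lambda>v. if v |\<in>| X then \<sigma> v else v) \<circ> inv r) w
      = (if w |\<in>| fimage r X then (r \<circ> \<sigma> \<circ> inv r) w else w)"
      using bij_inv_r[OF Just.prems(1)] by auto
  qed
  have h: "sfree (\<lambda>v. if v |\<in>| X then \<sigma> v else v) a"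
    using Just.prems(2) unfolding sfree.simps by (rule conjunct2)
  have "sfree (r \<circ> (\<lambda>v. if v |\<in>| X then \<sigma> v else v) \<circ> inv r) (ren r a)"
    by (rule Just.IH[OF Just.prems(1) h])
  then have s2: "sfree (\<lambda>w. if w |\<in>| fimage r X then (r \<circ> \<sigma> \<circ> inv r) w else w) (ren r a)"
    by (simp only: e)
  have s1: "\<forall>v\<in>fset (fimage r X). (r \<circ> \<sigma> \<circ> inv r) v \<notin> fv (ren r a) - fset (fimage r X)"
    using Just.prems by (auto simp: fv_ren inj inv_bij_eq inj_eq)
  show ?case using s1 s2 unfolding sfree.simps ren.simps by blast
qed auto

lemma ax_ren: "ax \<phi> \<Longrightarrow> bij r \<Longrightarrow> ax (ren r \<phi>)"
proof (induction rule: ax.induct)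
  case (A1_inst x y a)
  have e: "r \<circ> id(x := y) \<circ> inv r = id(r x := r y)"
  proof
    fix w show "(r \<circ> id(x := y) \<circ> inv r) w = (id(r x := r y)) w"
      using A1_inst.prems inv_bij_eq[of r x] bij_inv_r[of r w] by (cases "w = r x") auto
  qed
  have "sfree (id(r x := r y)) (ren r a)" using sfree_ren[OF A1_inst.prems A1_inst.hyps] e by simp
  then have "ax (Imp (Forall (r x) (ren r a)) (substf (id(r x := r y)) (ren r a)))"
    by (rule ax.A1_inst)
  then show ?case using ren_substf[OF A1_inst.prems, of "id(x:=y)" a] e by simp
next
  case (A1_dist x a b)
  then have "r x \<notin> fv (ren r a)" by (auto simp: fv_ren bij_is_inj inj_eq)
  then show ?case by (simp add: ax.A1_dist)
next
  case (A2 y a X t)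
  then have "r y \<notin> fv (ren r a)" "r y |\<notin>| fimage r X" by (auto simp: fv_ren bij_is_inj inj_eq)
  then show ?case by (simp add: ax.A2)
next
  case (A3 y X t a)
  then have "r y |\<notin>| fimage r X" by (auto simp: bij_is_inj inj_eq)
  then show ?case by (simp add: ax.A3)
next
  case (B5 x X t a)
  then have "r x |\<notin>| fimage r X" by (auto simp: bij_is_inj inj_eq)
  then show ?case by (simp add: ax.B5)
next
  case (Bb y X t a)
  then have "r y |\<notin>| fimage r X" by (auto simp: bij_is_inj inj_eq)
  then show ?case by (simp add: ax.Bb)
qed (auto intro: ax.intros)

lemma sfree_suff: "(\<forall>v\<in>allvars a. \<sigma> v = v \<or> \<sigma> v \<notin> allvars a) \<Longrightarrow> sfree \<sigma> a"
proof (induction a arbitrary: \<sigma>)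
  case (Forall z a)
  have "sfree (\<sigma>(z:=z)) a" by (rule Forall.IH) (use Forall.prems in auto)
  moreover have "\<forall>v\<in>fv a - {z}. \<sigma> v \<noteq> z"
  proof
    fix v assume v: "v \<in> fv a - {z}"
    then have "v \<in> allvars (Forall z a)" using fv_allvars by auto
    then have "\<sigma> v = v \<or> \<sigma> v \<notin> allvars (Forall z a)" using Forall.prems by blast
    then show "\<sigma> v \<noteq> z" using v by auto
  qed
  ultimately show ?case by simp
next
  case (Just t X a)
  have "sfree (\<lambda>v. if v |\<in>| X then \<sigma> v else v) a" by (rule Just.IH) (use Just.prems in auto)
  moreover have "\<forall>v\<in>fset X. \<sigma> v \<notin> fv a - fset X"
  proof
    fix v assume v: "v \<in> fset X"
    then have "v \<in> allvars (Just t X a)" by auto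
    then have "\<sigma> v = v \<or> \<sigma> v \<notin> allvars (Just t X a)" using Just.prems by blast
    then show "\<sigma> v \<notin> fv a - fset X" using v fv_allvars[of a] by auto
  qed
  ultimately show ?case by simp
qed auto

lemma basic_ren: "(\<forall>v\<in>allvars a. isB (r v)) \<Longrightarrow> basic (ren r a)"
  by (auto simp: basic_def allvars_ren)

lemma finite_tvars: "finite (tvars t)"
  by (induction t) auto

lemma finite_allvars: "finite (allvars a)"
  by (induction a) (auto simp: finite_tvars)

lemma isB_isW: "isB v \<Longrightarrow> isW v \<Longrightarrow> False"
  by (auto simp: isB_def isW_def)

definition good :: "var set \<Rightarrow> (var \<Rightarrow> var) \<Rightarrow> bool" where
  "good S r \<longleftrightarrow> bij r \<and> (\<forall>v\<in>S. isB (r v)) \<and> (\<forall>v\<in>S. isB v \<longrightarrow> r v = v)"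

lemma main_lemma:
  assumes cs: "const_spec CS" and vc: "variant_closed CS"
  shows "prvCSV CS \<phi> \<Longrightarrow> \<exists>S. finite S \<and> allvars \<phi> \<subseteq> S \<and> (\<forall>r. good S r \<longrightarrow> prvCS CS (ren r \<phi>))"
proof (induction rule: prv.induct)
  case (prv_ax \<phi>)
  have "finite (allvars \<phi>)" by (rule finite_allvars)
  then show ?case using prv_ax
    by (intro exI[of _ "allvars \<phi>"]) (auto simp: good_def intro!: prv.prv_ax ax_ren basic_ren)
next
  case (prv_cs \<phi>)
  then obtain c \<psi> \<sigma> where phi: "\<phi> = Just (JConst c) {||} (substf \<sigma> \<psi>)"
    and cps: "(c, \<psi>) \<in> CS" and rw: "replaceW \<sigma> \<psi>"
    by (auto simp: csfml_def CSV_def)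
  have bpsi: "basic \<psi>" using cs cps by (auto simp: const_spec_def)
  define S where "S = allvars \<phi> \<union> allvars \<psi>"
  have "\<forall>r. good S r \<longrightarrow> prvCS CS (ren r \<phi>)"
  proof (intro allI impI)
    fix r assume g: "good S r"
    have bij: "bij r" using g by (simp add: good_def)
    have fx: "\<forall>v\<in>allvars \<psi>. r v = v" using g bpsi by (auto simp: good_def S_def basic_def)
    have e: "ren r (substf \<sigma> \<psi>) = substf (r \<circ> \<sigma>) \<psi>" by (rule ren_substf_fix[OF fx])
    have b2: "basic (substf (r \<circ> \<sigma>) \<psi>)"
      unfolding e[symmetric] by (rule basic_ren) (use g in \<open>auto simp: good_def S_def phi\<close>)
    have inj: "inj_on (r \<circ> \<sigma>) (fv \<psi>)"
    proof (rule comp_inj_on)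
      show "inj_on \<sigma> (fv \<psi>)" using rw by (simp add: replaceW_def)
      show "inj_on r (\<sigma> ` fv \<psi>)" using bij_is_inj[OF bij] by (rule inj_on_subset) simp
    qed
    have sf: "sfree (r \<circ> \<sigma>) \<psi>"
    proof (rule sfree_suff, intro ballI)
      fix v assume v: "v \<in> allvars \<psi>"
      show "(r \<circ> \<sigma>) v = v \<or> (r \<circ> \<sigma>) v \<notin> allvars \<psi>"
      proof (cases "\<sigma> v = v")
        case True then show ?thesis using fx v by simp
      next
        case False
        then have vf: "v \<in> fv \<psi>" and w: "isW (\<sigma> v)" using rw by (auto simp: replaceW_def)
        have "\<sigma> v \<in> allvars (substf \<sigma> \<psi>)" by (rule subst_fv_in[OF vf])
        have "r (\<sigma> v) \<notin> allvars \<psi>"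
        proof
          assume u: "r (\<sigma> v) \<in> allvars \<psi>"
          then have "r (r (\<sigma> v)) = r (\<sigma> v)" using fx by blast
          then have "r (\<sigma> v) = \<sigma> v" using bij_is_inj[OF bij] by (simp add: inj_eq)
          then have "isB (\<sigma> v)" using u bpsi by (auto simp: basic_def)
          then show False using w isB_isW by blast
        qed
        then show ?thesis by simp
      qed
    qed
    have "variant \<psi> (substf (r \<circ> \<sigma>) \<psi>)"
      unfolding variant_def using bpsi b2 inj sf by blast
    then have "(c, substf (r \<circ> \<sigma>) \<psi>) \<in> CS" using vc cps by (auto simp: variant_closed_def)
    then have "Just (JConst c) {||} (substf (r \<circ> \<sigma>) \<psi>) \<in> csfml CS" by (auto simp: csfml_def)
    moreover have "ren r \<phi> = Just (JConst c) {||} (substf (r \<circ> \<sigma>) \<psi>)" using e by (simp add: phi)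
    ultimately show "prvCS CS (ren r \<phi>)" by (simp add: prv.prv_cs)
  qed
  then show ?case by (intro exI[of _ S]) (auto simp: S_def finite_allvars)
next
  case (prv_mp \<phi> \<psi>)
  then obtain S1 S2 where "finite S1" "allvars (Imp \<phi> \<psi>) \<subseteq> S1" "\<forall>r. good S1 r \<longrightarrow> prvCS CS (ren r (Imp \<phi> \<psi>))"
     "finite S2" "allvars \<phi> \<subseteq> S2" "\<forall>r. good S2 r \<longrightarrow> prvCS CS (ren r \<phi>)" by blast
  then show ?case
  proof (intro exI[of _ "S1 \<union> S2"] conjI allI impI)
    fix r assume g: "good (S1 \<union> S2) r"
    then have "good S1 r" "good S2 r" by (auto simp: good_def)
    then have "prvCS CS (Imp (ren r \<phi>) (ren r \<psi>))" "prvCS CS (ren r \<phi>)"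
      using \<open>\<forall>r. good S1 r \<longrightarrow> prvCS CS (ren r (Imp \<phi> \<psi>))\<close>
        \<open>\<forall>r. good S2 r \<longrightarrow> prvCS CS (ren r \<phi>)\<close> by auto
    then show "prvCS CS (ren r \<psi>)" by (rule prv.prv_mp)
  qed auto
next
  case (prv_gen \<phi> x)
  then obtain S where "finite S" "allvars \<phi> \<subseteq> S" "\<forall>r. good S r \<longrightarrow> prvCS CS (ren r \<phi>)" by blast
  then show ?case
  proof (intro exI[of _ "insert x S"] conjI allI impI)
    fix r assume g: "good (insert x S) r"
    then have "good S r" by (auto simp: good_def)
    then have p: "prvCS CS (ren r \<phi>)" using \<open>\<forall>r. good S r \<longrightarrow> prvCS CS (ren r \<phi>)\<close> by auto
    have "basic (ren r (Forall x \<phi>))"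
      by (rule basic_ren) (use g \<open>allvars \<phi> \<subseteq> S\<close> in \<open>auto simp: good_def\<close>)
    then show "prvCS CS (ren r (Forall x \<phi>))" using prv.prv_gen[OF p] by simp
  qed auto
qed

theorem mainTheorem9:
  assumes "const_spec CS" and "variant_closed CS"
    and "basic \<phi>" and "prvCSV CS \<phi>"
  shows "prvCS CS \<phi>"
proof -
  obtain S where fS: "finite S" and sub: "allvars \<phi> \<subseteq> S"
    and H: "\<forall>r. good S r \<longrightarrow> prvCS CS (ren r \<phi>)"
    using main_lemma[OF assms(1,2) assms(4)] by blast
  have "finite (BV -` S)" using fS by (rule finite_vimageI) (simp add: inj_def)
  then obtain m where m: "\<forall>k \<in> BV -` S. k < m" using finite_nat_set_iff_bounded by blast
  define W where "W = WV -` S"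
  define r where "r = (\<lambda>v. case v of WV n \<Rightarrow> (if n \<in> W then BV (m + n) else WV n)
      | BV k \<Rightarrow> (if m \<le> k \<and> k - m \<in> W then WV (k - m) else BV k))"
  have rr: "r (r v) = v" for v
    by (cases v) (auto simp: r_def)
  have bij: "bij r" by (rule o_bij[of r]) (auto simp: rr)
  have g: "good S r" unfolding good_def
  proof (intro conjI ballI impI bij)
    fix v assume v: "v \<in> S"
    show "isB (r v)"
    proof (cases v)
      case (BV k)
      then have "k < m" using v m by auto
      then show ?thesis using BV by (auto simp: r_def isB_def)
    next
      case (WV n) then show ?thesis using v by (auto simp: r_def isB_def W_def)
    qed
    assume "isB v"
    then obtain k where "v = BV k" by (auto simp: isB_def)
    moreover have "k < m" using v m \<open>v = BV k\<close> by auto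
    ultimately show "r v = v" by (auto simp: r_def)
  qed
  have "ren r \<phi> = \<phi>"
  proof (rule ren_id, intro ballI)
    fix v assume v: "v \<in> allvars \<phi>"
    then have "isB v" using assms(3) by (auto simp: basic_def)
    then obtain k where "v = BV k" by (auto simp: isB_def)
    moreover have "k < m" using v sub m \<open>v = BV k\<close> by auto
    ultimately show "r v = v" by (auto simp: r_def)
  qed
  then show ?thesis using H g by metis
qed

end
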